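(* Every LHS assemblage $\{\rho_{b|\theta}\}_{b\in\{0,1,\varnothing\},\theta\in[0,\pi)}$ on $\mathbb C^2$ satisfies $$|\mathsf W|\ \le\ \frac{2}{\pi}\sin\left(\frac{\pi}{2}\mathsf T\right).$$ Moreover, the bound is tight: for every $t\in[0,1]$ there is an LHS assemblage with $\mathsf t(\theta)=t$ and $\mathsf w(\theta)=\frac2\pi\sin\left(\frac{\pi}{2}t\right)$ for all $\theta\in[0,\pi)$.
   Context: An LHS assemblage with continuous input $\theta\in[0,\pi)$ is $\rho_{b|\theta}=\int_\Lambda p(b|\theta,\lambda)\,\varrho_\lambda\,d\mu(\lambda)$, where $(\Lambda,\mu)$ is a probability space, $\lambda\mapsto\varrho_\lambda$ is a measurable family of $2\times2$ density matrices, and $p(b|\theta,\lambda)$ are conditional probabilities on $b\in\{0,1,\varnothing\}$, jointly measurable in $(\theta,\lambda)$. With $Z,X$ the Pauli matrices, $\mathsf t(\theta):=\mathrm{tr}(\rho_{0|\theta}+\rho_{1|\theta})$, $\mathsf w(\theta):=\mathrm{tr}\big[(\cos\theta\,Z+\sin\theta\,X)(\rho_{0|\theta}-\rho_{1|\theta})\big]$, $\mathsf T:=\int_0^\pi\frac{d\theta}{\pi}\mathsf t(\theta)$, $\mathsf W:=\int_0^\pi\frac{d\theta}{\pi}\mathsf w(\theta)$. *)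

theory Defs
  imports "HOL-Probability.Probability"
begin

datatype outcome = B0 | B1 | Bnone

type_synonym mat2 = "complex^2^2"

definition pauliZ :: mat2 where
  "pauliZ = (\<chi> i j. if i = j then (if i = 1 then 1 else -1) else 0)"

definition pauliX :: mat2 where
  "pauliX = (\<chi> i j. if i = j then 0 else 1)"

definition density_matrix :: "mat2 \<Rightarrow> bool" where
  "density_matrix A \<longleftrightarrow>
     (\<forall>i j. A $ i $ j = cnj (A $ j $ i)) \<and>
     (\<forall>v :: complex^2. let q = (\<Sum>i\<in>UNIV. \<Sum>j\<in>UNIV. cnj (v $ i) * A $ i $ j * v $ j)
                       in Im q = 0 \<and> 0 \<le> Re q) \<and>
     trace A = 1"

definition LHS_model :: "'l measure \<Rightarrow> (real \<Rightarrow> 'l \<Rightarrow> outcome \<Rightarrow> real) \<Rightarrow> ('l \<Rightarrow> mat2) \<Rightarrow> bool" where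
  "LHS_model M p \<rho> \<longleftrightarrow>
     prob_space M \<and>
     \<rho> \<in> borel_measurable M \<and>
     (\<forall>l\<in>space M. density_matrix (\<rho> l)) \<and>
     (\<forall>b. (\<lambda>(\<theta>, l). p \<theta> l b) \<in> borel_measurable (restrict_space borel {0..<pi} \<Otimes>\<^sub>M M)) \<and>
     (\<forall>\<theta>\<in>{0..<pi}. \<forall>l\<in>space M.
        (\<forall>b. 0 \<le> p \<theta> l b) \<and> p \<theta> l B0 + p \<theta> l B1 + p \<theta> l Bnone = 1)"

definition assemblage :: "'l measure \<Rightarrow> (real \<Rightarrow> 'l \<Rightarrow> outcome \<Rightarrow> real) \<Rightarrow> ('l \<Rightarrow> mat2)
    \<Rightarrow> outcome \<Rightarrow> real \<Rightarrow> mat2" where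
  "assemblage M p \<rho> b \<theta> = (\<integral>l. p \<theta> l b *\<^sub>R \<rho> l \<partial>M)"

text \<open>t(theta) and w(theta); these traces are real (Hermitian matrices), we take Re.\<close>
definition tfun :: "'l measure \<Rightarrow> (real \<Rightarrow> 'l \<Rightarrow> outcome \<Rightarrow> real) \<Rightarrow> ('l \<Rightarrow> mat2) \<Rightarrow> real \<Rightarrow> real" where
  "tfun M p \<rho> \<theta> = Re (trace (assemblage M p \<rho> B0 \<theta> + assemblage M p \<rho> B1 \<theta>))"

definition wfun :: "'l measure \<Rightarrow> (real \<Rightarrow> 'l \<Rightarrow> outcome \<Rightarrow> real) \<Rightarrow> ('l \<Rightarrow> mat2) \<Rightarrow> real \<Rightarrow> real" where
  "wfun M p \<rho> \<theta> = Re (trace ((cos \<theta> *\<^sub>R pauliZ + sin \<theta> *\<^sub>R pauliX) **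
                        (assemblage M p \<rho> B0 \<theta> - assemblage M p \<rho> B1 \<theta>)))"

definition TT :: "'l measure \<Rightarrow> (real \<Rightarrow> 'l \<Rightarrow> outcome \<Rightarrow> real) \<Rightarrow> ('l \<Rightarrow> mat2) \<Rightarrow> real" where
  "TT M p \<rho> = (LBINT \<theta>:{0..<pi}. tfun M p \<rho> \<theta>) / pi"

definition WW :: "'l measure \<Rightarrow> (real \<Rightarrow> 'l \<Rightarrow> outcome \<Rightarrow> real) \<Rightarrow> ('l \<Rightarrow> mat2) \<Rightarrow> real" where
  "WW M p \<rho> = (LBINT \<theta>:{0..<pi}. wfun M p \<rho> \<theta>) / pi"

end

theory Submission
  imports Defs
begin

definition zz :: "mat2 \<Rightarrow> real" where "zz A = Re (A$1$1) - Re (A$2$2)"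
definition xx :: "mat2 \<Rightarrow> real" where "xx A = Re (A$1$2) + Re (A$2$1)"

lemma one_neq_two2[simp]: "(1::2) \<noteq> 2" "(2::2) \<noteq> 1" by auto

lemma trace_N: "Re (trace ((cos \<theta> *\<^sub>R pauliZ + sin \<theta> *\<^sub>R pauliX) ** A)) = zz A * cos \<theta> + xx A * sin \<theta>"
  by (simp add: trace_def matrix_matrix_mult_def sum_2 pauliZ_def pauliX_def zz_def xx_def algebra_simps)

lemma dm_bound:
  assumes "density_matrix A"
  shows "(zz A)^2 + (xx A)^2 \<le> 1" "Re (trace A) = 1"
proof -
  have herm: "\<And>i j. A $ i $ j = cnj (A $ j $ i)" and psd: "\<And>v::complex^2. 0 \<le> Re (\<Sum>i\<in>UNIV. \<Sum>j\<in>UNIV. cnj (v $ i) * A $ i $ j * v $ j)"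
     and tr: "trace A = 1" using assms unfolding density_matrix_def Let_def by blast+
  show "Re (trace A) = 1" using tr by simp
  define a where "a = Re (A$1$1)"
  define d where "d = Re (A$2$2)"
  define b where "b = Re (A$1$2)"
  have b2: "Re (A$2$1) = b" using herm[of 2 1] b_def by simp
  have q: "\<And>s u. 0 \<le> s * s * a + u * u * d - 2 * s * u * b"
  proof -
    fix s u :: real
    have "0 \<le> Re (\<Sum>i\<in>UNIV. \<Sum>j\<in>UNIV. cnj ((vector [complex_of_real s, complex_of_real (-u)] :: complex^2) $ i) * A $ i $ j * (vector [complex_of_real s, complex_of_real (-u)] :: complex^2) $ j)"
      by (rule psd)
    also have "\<dots> = s * s * a + u * u * d - 2 * s * u * b"
      using b2 by (simp add: sum_2 a_def d_def b_def algebra_simps)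
    finally show "0 \<le> s * s * a + u * u * d - 2 * s * u * b" .
  qed
  have ad: "a + d = 1" using arg_cong[OF tr, of Re] by (simp add: trace_def sum_2 a_def d_def)
  have a0: "0 \<le> a" using q[of 1 0] by simp
  have d0: "0 \<le> d" using q[of 0 1] by simp
  have key: "b*b \<le> a*d"
  proof (cases "a > 0")
    case True
    have "0 \<le> b*b*a + a*a*d - 2*b*a*b" using q[of b a] by simp
    hence "0 \<le> a * (a*d - b*b)" by (simp add: algebra_simps)
    thus ?thesis using True by (simp add: zero_le_mult_iff)
  next
    case False
    hence "d > 0" using ad a0 by simp
    have "0 \<le> d*d*a + b*b*d - 2*d*b*b" using q[of d b] by simp
    hence "0 \<le> d * (a*d - b*b)" by (simp add: algebra_simps)
    thus ?thesis using \<open>d>0\<close> by (simp add: zero_le_mult_iff)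
  qed
  have "(zz A)^2 + (xx A)^2 = (a-d)^2 + 4*b*b" unfolding zz_def xx_def using b2 by (simp add: a_def d_def b_def power2_eq_square)
  also have "\<dots> \<le> (a+d)^2" using key by (simp add: power2_eq_square algebra_simps)
  finally show "(zz A)^2 + (xx A)^2 \<le> 1" using ad by simp
qed

lemma norm_vec_le_sum: "norm (x :: 'a::real_normed_vector^'n) \<le> (\<Sum>i\<in>UNIV. norm (x$i))"
  unfolding norm_vec_def by (rule L2_set_le_sum) simp

lemma dm_entry:
  assumes "density_matrix A"
  shows "norm (A $ i $ j) \<le> 1"
proof -
  have herm: "\<And>i j. A $ i $ j = cnj (A $ j $ i)" and psd: "\<And>v::complex^2. 0 \<le> Re (\<Sum>i\<in>UNIV. \<Sum>j\<in>UNIV. cnj (v $ i) * A $ i $ j * v $ j)"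
     and tr: "trace A = 1" using assms unfolding density_matrix_def Let_def by blast+
  have im1: "Im (A$1$1) = 0" using herm[of 1 1] by (metis cnj.sel(2) equation_minus_iff zero_complex.sel(2) add.inverse_neutral neg_equal_zero)
  have im2: "Im (A$2$2) = 0" using herm[of 2 2] by (metis cnj.sel(2) neg_equal_zero)
  define a where "a = Re (A$1$1)"
  define d where "d = Re (A$2$2)"
  have A11: "A$1$1 = of_real a" using im1 a_def by (simp add: complex_eq_iff)
  have A22: "A$2$2 = of_real d" using im2 d_def by (simp add: complex_eq_iff)
  have ad: "a + d = 1" using tr by (simp add: trace_def sum_2 A11 A22 complex_eq_iff)
  have q: "\<And>v::complex^2. 0 \<le> Re (\<Sum>i\<in>UNIV. \<Sum>j\<in>UNIV. cnj (v $ i) * A $ i $ j * v $ j)" by (rule psd)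
  have a0: "0 \<le> a" using q[of "vector [1, 0]"] by (simp add: sum_2 A11 A22)
  have d0: "0 \<le> d" using q[of "vector [0, 1]"] by (simp add: sum_2 A11 A22)
  define b where "b = A$1$2"
  have A21: "A$2$1 = cnj b" using herm[of 2 1] b_def by simp
  have "0 \<le> Re (\<Sum>i\<in>UNIV. \<Sum>j\<in>UNIV. cnj ((vector [1, - cnj b] :: complex^2) $ i) * A $ i $ j * (vector [1, - cnj b] :: complex^2) $ j)"
    by (rule q)
  also have "\<dots> = a - 2 * (norm b)^2 + (norm b)^2 * d"
  proof -
    have nb2: "cmod b * cmod b = Re b * Re b + Im b * Im b" by (metis cmod_power2 power2_eq_square)
    show ?thesis by (simp add: sum_2 A11 A22 A21 b_def[symmetric] nb2 algebra_simps power2_eq_square)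
  qed
  finally have "(norm b)^2 * (2 - d) \<le> a" by (simp add: algebra_simps)
  moreover have "0 \<le> (norm b)^2 * (1 - d)" using ad a0 by simp
  moreover have "(norm b)^2 * (2 - d) = (norm b)^2 + (norm b)^2 * (1 - d)" by (simp add: algebra_simps)
  ultimately have nb: "(norm b)^2 \<le> 1" using ad d0 by linarith
  hence nb1: "norm b \<le> 1" by (simp add: power_le_one_iff abs_le_iff)
  have "norm (A$1$1) \<le> 1" "norm (A$2$2) \<le> 1" "norm (A$1$2) \<le> 1" "norm (A$2$1) \<le> 1"
    using a0 d0 ad nb1 by (auto simp: A11 A22 A21 b_def[symmetric])
  thus ?thesis using exhaust_2[of i] exhaust_2[of j] by auto
qed

lemma dm_norm: "density_matrix A \<Longrightarrow> norm A \<le> 4"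
proof -
  assume "density_matrix A"
  hence e: "\<And>i j. norm (A$i$j) \<le> 1" by (rule dm_entry)
  have "norm A \<le> (\<Sum>i\<in>UNIV. norm (A$i))" by (rule norm_vec_le_sum)
  also have "\<dots> \<le> (\<Sum>i\<in>(UNIV::2 set). \<Sum>j\<in>(UNIV::2 set). norm (A$i$j))"
    by (intro sum_mono norm_vec_le_sum)
  also have "\<dots> \<le> 4" using e[of 1 1] e[of 1 2] e[of 2 1] e[of 2 2] by (simp add: sum_2)
  finally show ?thesis .
qed


definition tr1 :: "mat2 \<Rightarrow> real" where "tr1 A = Re (A$1$1) + Re (A$2$2)"

lemma bl_entry: "bounded_linear (\<lambda>A::mat2. Re (A$i$j))"
  by (rule bounded_linear_compose[OF bounded_linear_Re bounded_linear_compose[OF bounded_linear_vec_nth bounded_linear_vec_nth]])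

lemma bl_zz: "bounded_linear zz"
  unfolding zz_def[abs_def] by (intro bounded_linear_sub bl_entry)
lemma bl_xx: "bounded_linear xx"
  unfolding xx_def[abs_def] by (intro bounded_linear_add bl_entry)
lemma bl_tr1: "bounded_linear tr1"
  unfolding tr1_def[abs_def] by (intro bounded_linear_add bl_entry)
lemma bl_N: "bounded_linear (\<lambda>A. zz A * cos \<theta> + xx A * sin \<theta>)"
  by (intro bounded_linear_add bounded_linear_mult_left bounded_linear_compose[OF bounded_linear_mult_left] bl_zz bl_xx)

lemma meas_zz[measurable]: "zz \<in> borel_measurable borel"
  by (intro borel_measurable_continuous_onI linear_continuous_on bl_zz)
lemma meas_xx[measurable]: "xx \<in> borel_measurable borel"
  by (intro borel_measurable_continuous_onI linear_continuous_on bl_xx)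

lemma LHS_facts:
  assumes "LHS_model M p \<rho>"
  shows "prob_space M" "\<rho> \<in> borel_measurable M" "\<And>l. l \<in> space M \<Longrightarrow> density_matrix (\<rho> l)"
    "\<And>b. (\<lambda>(\<theta>, l). p \<theta> l b) \<in> borel_measurable (restrict_space borel {0..<pi} \<Otimes>\<^sub>M M)"
    "\<And>\<theta> l b. \<theta> \<in> {0..<pi} \<Longrightarrow> l \<in> space M \<Longrightarrow> 0 \<le> p \<theta> l b"
    "\<And>\<theta> l. \<theta> \<in> {0..<pi} \<Longrightarrow> l \<in> space M \<Longrightarrow> p \<theta> l B0 + p \<theta> l B1 + p \<theta> l Bnone = 1"
  using assms unfolding LHS_model_def by auto

lemma p_le1:
  assumes "LHS_model M p \<rho>" "\<theta> \<in> {0..<pi}" "l \<in> space M"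
  shows "p \<theta> l b \<le> 1"
  using LHS_facts(5)[OF assms(1,2,3), of B0] LHS_facts(5)[OF assms(1,2,3), of B1]
    LHS_facts(5)[OF assms(1,2,3), of Bnone] LHS_facts(6)[OF assms(1,2,3)]
  by (cases b) auto

lemma p_meas:
  assumes "LHS_model M p \<rho>" "\<theta> \<in> {0..<pi}"
  shows "(\<lambda>l. p \<theta> l b) \<in> borel_measurable M"
  using measurable_Pair2[OF LHS_facts(4)[OF assms(1), of b], of \<theta>] assms(2) by simp

lemma pr_int:
  assumes "LHS_model M p \<rho>" "\<theta> \<in> {0..<pi}"
  shows "integrable M (\<lambda>l. p \<theta> l b *\<^sub>R \<rho> l)"
proof -
  interpret prob_space M by (rule LHS_facts(1)[OF assms(1)])
  have [measurable]: "\<rho> \<in> borel_measurable M" by (rule LHS_facts(2)[OF assms(1)])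
  have [measurable]: "(\<lambda>l. p \<theta> l b) \<in> borel_measurable M" by (rule p_meas[OF assms])
  show ?thesis
  proof (rule integrable_const_bound[where B=4])
    show "AE l in M. norm (p \<theta> l b *\<^sub>R \<rho> l) \<le> 4"
    proof (rule AE_I2)
      fix l assume l: "l \<in> space M"
      have "norm (p \<theta> l b *\<^sub>R \<rho> l) = \<bar>p \<theta> l b\<bar> * norm (\<rho> l)" by simp
      also have "\<dots> \<le> 1 * 4"
        using LHS_facts(5)[OF assms(1,2) l, of b] p_le1[OF assms l, of b] dm_norm[OF LHS_facts(3)[OF assms(1) l]]
        by (intro mult_mono) auto
      finally show "norm (p \<theta> l b *\<^sub>R \<rho> l) \<le> 4" by simp
    qed
  qed measurable
qed

lemma lin_ass:
  assumes "LHS_model M p \<rho>" "\<theta> \<in> {0..<pi}" "bounded_linear f"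
  shows "f (assemblage M p \<rho> b \<theta>) = (\<integral>l. f (p \<theta> l b *\<^sub>R \<rho> l) \<partial>M)"
  unfolding assemblage_def by (rule integral_bounded_linear[OF assms(3) pr_int[OF assms(1,2)], symmetric])

lemma tfun_formula:
  assumes "LHS_model M p \<rho>" "\<theta> \<in> {0..<pi}"
  shows "tfun M p \<rho> \<theta> = (\<integral>l. p \<theta> l B0 + p \<theta> l B1 \<partial>M)"
proof -
  have i: "\<And>b. integrable M (\<lambda>l. tr1 (p \<theta> l b *\<^sub>R \<rho> l))"
    by (rule integrable_bounded_linear[OF bl_tr1 pr_int[OF assms]])
  have "tfun M p \<rho> \<theta> = tr1 (assemblage M p \<rho> B0 \<theta>) + tr1 (assemblage M p \<rho> B1 \<theta>)"
    unfolding tfun_def tr1_def by (simp add: trace_def sum_2)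
  also have "\<dots> = (\<integral>l. tr1 (p \<theta> l B0 *\<^sub>R \<rho> l) + tr1 (p \<theta> l B1 *\<^sub>R \<rho> l) \<partial>M)"
    by (simp add: lin_ass[OF assms bl_tr1] Bochner_Integration.integral_add[OF i i])
  also have "\<dots> = (\<integral>l. p \<theta> l B0 + p \<theta> l B1 \<partial>M)"
  proof (rule Bochner_Integration.integral_cong[OF refl])
    fix l assume l: "l \<in> space M"
    have "tr1 (\<rho> l) = 1" using dm_bound(2)[OF LHS_facts(3)[OF assms(1) l]] by (simp add: tr1_def trace_def sum_2)
    thus "tr1 (p \<theta> l B0 *\<^sub>R \<rho> l) + tr1 (p \<theta> l B1 *\<^sub>R \<rho> l) = p \<theta> l B0 + p \<theta> l B1"
    proof -
      have "\<And>c A. tr1 (c *\<^sub>R A) = c * tr1 A" by (simp add: tr1_def algebra_simps)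
      thus ?thesis using \<open>tr1 (\<rho> l) = 1\<close> by simp
    qed
  qed
  finally show ?thesis .
qed

lemma wfun_formula:
  assumes "LHS_model M p \<rho>" "\<theta> \<in> {0..<pi}"
  shows "wfun M p \<rho> \<theta> = (\<integral>l. (p \<theta> l B0 - p \<theta> l B1) * (zz (\<rho> l) * cos \<theta> + xx (\<rho> l) * sin \<theta>) \<partial>M)"
proof -
  let ?f = "\<lambda>A. zz A * cos \<theta> + xx A * sin \<theta>"
  have bl: "bounded_linear ?f" by (rule bl_N)
  interpret f: bounded_linear ?f by (rule bl)
  have i: "\<And>b. integrable M (\<lambda>l. ?f (p \<theta> l b *\<^sub>R \<rho> l))"
    by (rule integrable_bounded_linear[OF bl pr_int[OF assms]])
  have "wfun M p \<rho> \<theta> = ?f (assemblage M p \<rho> B0 \<theta> - assemblage M p \<rho> B1 \<theta>)"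
    unfolding wfun_def by (rule trace_N)
  also have "\<dots> = ?f (assemblage M p \<rho> B0 \<theta>) - ?f (assemblage M p \<rho> B1 \<theta>)" by (rule f.diff)
  also have "\<dots> = (\<integral>l. ?f (p \<theta> l B0 *\<^sub>R \<rho> l) - ?f (p \<theta> l B1 *\<^sub>R \<rho> l) \<partial>M)"
    by (simp only: lin_ass[OF assms bl] Bochner_Integration.integral_diff[OF i i])
  also have "\<dots> = (\<integral>l. (p \<theta> l B0 - p \<theta> l B1) * (zz (\<rho> l) * cos \<theta> + xx (\<rho> l) * sin \<theta>) \<partial>M)"
    by (simp add: zz_def xx_def algebra_simps)
  finally show ?thesis .
qed


lemma int_ind:
  fixes g :: "real \<Rightarrow> real"
  assumes [measurable]: "g \<in> borel_measurable borel" and bd: "\<And>u. \<bar>g u\<bar> \<le> B"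
  shows "integrable lborel (\<lambda>u. indicator {s..<e} u *\<^sub>R g u)"
  by (rule integrableI_bounded_set_indicator[where B=B]) (auto simp: bd, cases "s \<le> e", auto)

lemma window_step:
  fixes g :: "real \<Rightarrow> real"
  assumes [measurable]: "g \<in> borel_measurable borel" and bd: "\<And>u. \<bar>g u\<bar> \<le> B"
    and per: "\<And>u. g (u + pi) = g u" and ab: "a \<le> b" "b \<le> a + pi"
  shows "(LINT u:{a..<a+pi}|lborel. g u) = (LINT u:{b..<b+pi}|lborel. g u)"
proof -
  let ?J = "\<lambda>s e. LINT u|lborel. indicator {s..<e} u *\<^sub>R g u"
  have i: "\<And>s e. integrable lborel (\<lambda>u. indicator {s..<e} u *\<^sub>R g u)" by (rule int_ind[OF assms(1) bd])
  have 1: "(LINT u:{a..<a+pi}|lborel. g u) = ?J a b + ?J b (a+pi)"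
  proof -
    have "(LINT u:{a..<a+pi}|lborel. g u) = (LINT u|lborel. indicator {a..<b} u *\<^sub>R g u + indicator {b..<a+pi} u *\<^sub>R g u)"
      unfolding set_lebesgue_integral_def
      by (rule Bochner_Integration.integral_cong) (use ab in \<open>auto simp: indicator_def\<close>)
    also have "\<dots> = ?J a b + ?J b (a+pi)" by (rule Bochner_Integration.integral_add[OF i i])
    finally show ?thesis .
  qed
  have 2: "(LINT u:{b..<b+pi}|lborel. g u) = ?J b (a+pi) + ?J (a+pi) (b+pi)"
  proof -
    have "(LINT u:{b..<b+pi}|lborel. g u) = (LINT u|lborel. indicator {b..<a+pi} u *\<^sub>R g u + indicator {a+pi..<b+pi} u *\<^sub>R g u)"
      unfolding set_lebesgue_integral_def
      by (rule Bochner_Integration.integral_cong) (use ab in \<open>auto simp: indicator_def\<close>)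
    also have "\<dots> = ?J b (a+pi) + ?J (a+pi) (b+pi)" by (rule Bochner_Integration.integral_add[OF i i])
    finally show ?thesis .
  qed
  have 3: "?J (a+pi) (b+pi) = ?J a b"
  proof -
    have "?J (a+pi) (b+pi) = \<bar>1\<bar> *\<^sub>R (LINT x|lborel. indicator {a+pi..<b+pi} (pi + 1 * x) *\<^sub>R g (pi + 1 * x))"
      by (rule lborel_integral_real_affine) simp
    also have "\<dots> = ?J a b"
      by (simp add: indicator_def add.commute per)
    finally show ?thesis .
  qed
  show ?thesis using 1 2 3 by simp
qed

lemma window:
  fixes g :: "real \<Rightarrow> real"
  assumes [measurable]: "g \<in> borel_measurable borel" and bd: "\<And>u. \<bar>g u\<bar> \<le> B"
    and per: "\<And>u. g (u + pi) = g u" and ab: "\<bar>a - b\<bar> \<le> pi"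
  shows "(LINT u:{a..<a+pi}|lborel. g u) = (LINT u:{b..<b+pi}|lborel. g u)"
proof (cases "a \<le> b")
  case True thus ?thesis using window_step[OF assms(1) bd per, of a b] ab by simp
next
  case False thus ?thesis using window_step[OF assms(1) bd per, of b a] ab by simp
qed


lemma cos_gt_iff:
  fixes u \<alpha> :: real
  assumes "\<bar>u\<bar> \<le> pi" "0 \<le> \<alpha>" "\<alpha> \<le> pi"
  shows "cos \<alpha> < cos u \<longleftrightarrow> \<bar>u\<bar> < \<alpha>"
proof -
  have "cos u = cos \<bar>u\<bar>" by (simp add: abs_if)
  thus ?thesis using cos_mono_less_eq[of \<alpha> "\<bar>u\<bar>"] assms by simp
qed

lemma cos_ge_iff:
  fixes u \<alpha> :: real
  assumes "\<bar>u\<bar> \<le> pi" "0 \<le> \<alpha>" "\<alpha> \<le> pi"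
  shows "cos \<alpha> \<le> cos u \<longleftrightarrow> \<bar>u\<bar> \<le> \<alpha>"
proof -
  have e: "cos u = cos \<bar>u\<bar>" by (simp add: abs_if)
  have "(cos \<bar>u\<bar> < cos \<alpha>) = (\<alpha> < \<bar>u\<bar>)" using cos_mono_less_eq[of "\<bar>u\<bar>" \<alpha>] assms by simp
  thus ?thesis unfolding e by (metis not_less)
qed

lemma E1:
  assumes "0 \<le> \<alpha>" "\<alpha> \<le> pi/2"
  shows "(LINT u:{-pi/2..<-pi/2+pi}|lborel. max (\<bar>cos u\<bar> - cos \<alpha>) 0) = 2 * sin \<alpha> - 2 * \<alpha> * cos \<alpha>"
proof -
  have "(LINT u:{-pi/2..<-pi/2+pi}|lborel. max (\<bar>cos u\<bar> - cos \<alpha>) 0) = (LINT u|lborel. indicator {-\<alpha>..\<alpha>} u *\<^sub>R (cos u - cos \<alpha>))"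
    unfolding set_lebesgue_integral_def
  proof (rule Bochner_Integration.integral_cong[OF refl])
    fix u :: real
    show "indicator {-pi/2..<-pi/2+pi} u *\<^sub>R max (\<bar>cos u\<bar> - cos \<alpha>) 0 = indicator {-\<alpha>..\<alpha>} u *\<^sub>R (cos u - cos \<alpha>)"
    proof (cases "u \<in> {-pi/2..<-pi/2+pi}")
      case True
      hence c0: "0 \<le> cos u" by (intro cos_ge_zero) auto
      have "\<bar>u\<bar> \<le> pi" using True by auto
      then have iff: "cos \<alpha> \<le> cos u \<longleftrightarrow> \<bar>u\<bar> \<le> \<alpha>" using cos_ge_iff[of u \<alpha>] assms by simp
      show ?thesis using True c0 iff by (auto simp: indicator_def abs_le_iff)
    next
      case False
      show ?thesis
      proof (cases "u \<in> {-\<alpha>..\<alpha>}")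
        case True
        hence "u = pi/2" using False assms by auto
        hence "\<alpha> = pi/2" using True assms by auto
        hence "u = \<alpha>" using \<open>u = pi/2\<close> by simp
        thus ?thesis using False by (simp add: indicator_def)
      qed (use False in \<open>auto simp: indicator_def\<close>)
    qed
  qed
  also have "\<dots> = (sin \<alpha> - \<alpha> * cos \<alpha>) - (sin (-\<alpha>) - (-\<alpha>) * cos \<alpha>)"
  proof (rule integral_FTC_atLeastAtMost)
    fix x :: real
    show "((\<lambda>u. sin u - u * cos \<alpha>) has_vector_derivative (cos x - cos \<alpha>)) (at x within {-\<alpha>..\<alpha>})"
      unfolding has_real_derivative_iff_has_vector_derivative[symmetric]
      by (auto intro!: derivative_eq_intros)
    show "continuous_on {-\<alpha>..\<alpha>} (\<lambda>x. cos x - cos \<alpha>)" by (intro continuous_intros)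
  qed (use assms in simp)
  finally show ?thesis by simp
qed

definition g1 :: "real \<Rightarrow> real \<Rightarrow> real" where
  "g1 c u = (if cos u > c then 1 else 0) + (if cos u < -c then 1 else 0)"
definition g2 :: "real \<Rightarrow> real \<Rightarrow> real" where
  "g2 c u = ((if cos u > c then 1 else 0) - (if cos u < -c then 1 else 0)) * cos u"

lemma g_window:
  assumes "0 \<le> \<alpha>" "\<alpha> \<le> pi/2" "u \<noteq> \<alpha>" "u \<noteq> -\<alpha>"
  shows "indicator {-pi/2..<-pi/2+pi} u *\<^sub>R g1 (cos \<alpha>) u = indicator {-\<alpha>..\<alpha>} u *\<^sub>R 1"
    "indicator {-pi/2..<-pi/2+pi} u *\<^sub>R g2 (cos \<alpha>) u = indicator {-\<alpha>..\<alpha>} u *\<^sub>R cos u"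
proof -
  have ca: "0 \<le> cos \<alpha>" using assms by (intro cos_ge_zero) auto
  have "indicator {-pi/2..<-pi/2+pi} u *\<^sub>R g1 (cos \<alpha>) u = indicator {-\<alpha>..\<alpha>} u *\<^sub>R 1 \<and>
        indicator {-pi/2..<-pi/2+pi} u *\<^sub>R g2 (cos \<alpha>) u = indicator {-\<alpha>..\<alpha>} u *\<^sub>R cos u"
  proof (cases "u \<in> {-pi/2..<-pi/2+pi}")
    case True
    hence c0: "0 \<le> cos u" by (intro cos_ge_zero) auto
    have "\<bar>u\<bar> \<le> pi" using True by auto
    then have iff: "cos \<alpha> < cos u \<longleftrightarrow> \<bar>u\<bar> < \<alpha>" using cos_gt_iff[of u \<alpha>] assms by simp
    have "\<bar>u\<bar> < \<alpha> \<longleftrightarrow> u \<in> {-\<alpha>..\<alpha>}" using assms by auto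
    thus ?thesis using True c0 ca iff by (auto simp: indicator_def g1_def g2_def)
  next
    case False
    have "u \<notin> {-\<alpha>..\<alpha>}" using False assms by auto
    thus ?thesis using False by (auto simp: indicator_def)
  qed
  thus "indicator {-pi/2..<-pi/2+pi} u *\<^sub>R g1 (cos \<alpha>) u = indicator {-\<alpha>..\<alpha>} u *\<^sub>R 1"
    "indicator {-pi/2..<-pi/2+pi} u *\<^sub>R g2 (cos \<alpha>) u = indicator {-\<alpha>..\<alpha>} u *\<^sub>R cos u" by auto
qed

lemma g1_meas[measurable]: "g1 c \<in> borel_measurable borel" unfolding g1_def by measurable
lemma g2_meas[measurable]: "g2 c \<in> borel_measurable borel" unfolding g2_def by measurable

lemma E2:
  assumes "0 \<le> \<alpha>" "\<alpha> \<le> pi/2"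
  shows "(LINT u:{-pi/2..<-pi/2+pi}|lborel. g1 (cos \<alpha>) u) = 2 * \<alpha>"
proof -
  have "(LINT u:{-pi/2..<-pi/2+pi}|lborel. g1 (cos \<alpha>) u) = (LINT u|lborel. indicator {-\<alpha>..\<alpha>} u *\<^sub>R (1::real))"
    unfolding set_lebesgue_integral_def
  proof (rule integral_cong_AE)
    have "AE u in lborel. u \<noteq> \<alpha>" "AE u in lborel. u \<noteq> -\<alpha>" by (rule AE_lborel_singleton)+
    then show "AE u in lborel. indicator {-pi/2..<-pi/2+pi} u *\<^sub>R g1 (cos \<alpha>) u = indicator {-\<alpha>..\<alpha>} u *\<^sub>R 1"
      by eventually_elim (use g_window[OF assms] in auto)
  qed measurable
  also have "\<dots> = \<alpha> - (-\<alpha>)"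
  proof (rule integral_FTC_atLeastAtMost)
    fix x :: real
    show "((\<lambda>u. u) has_vector_derivative (1)) (at x within {-\<alpha>..\<alpha>})"
      unfolding has_real_derivative_iff_has_vector_derivative[symmetric]
      by (auto intro!: derivative_eq_intros)
    show "continuous_on {-\<alpha>..\<alpha>} (\<lambda>x. 1)" by (intro continuous_intros)
  qed (use assms in simp)
  finally show ?thesis by simp
qed

lemma E3:
  assumes "0 \<le> \<alpha>" "\<alpha> \<le> pi/2"
  shows "(LINT u:{-pi/2..<-pi/2+pi}|lborel. g2 (cos \<alpha>) u) = 2 * sin \<alpha>"
proof -
  have "(LINT u:{-pi/2..<-pi/2+pi}|lborel. g2 (cos \<alpha>) u) = (LINT u|lborel. indicator {-\<alpha>..\<alpha>} u *\<^sub>R cos u)"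
    unfolding set_lebesgue_integral_def
  proof (rule integral_cong_AE)
    have "AE u in lborel. u \<noteq> \<alpha>" "AE u in lborel. u \<noteq> -\<alpha>" by (rule AE_lborel_singleton)+
    then show "AE u in lborel. indicator {-pi/2..<-pi/2+pi} u *\<^sub>R g2 (cos \<alpha>) u = indicator {-\<alpha>..\<alpha>} u *\<^sub>R cos u"
      by eventually_elim (use g_window[OF assms] in auto)
  qed measurable
  also have "\<dots> = sin \<alpha> - sin (-\<alpha>)"
  proof (rule integral_FTC_atLeastAtMost)
    fix x :: real
    show "((\<lambda>u. sin u) has_vector_derivative (cos x)) (at x within {-\<alpha>..\<alpha>})"
      unfolding has_real_derivative_iff_has_vector_derivative[symmetric]
      by (auto intro!: derivative_eq_intros)
    show "continuous_on {-\<alpha>..\<alpha>} (\<lambda>x. cos x)" by (intro continuous_intros)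
  qed (use assms in simp)
  finally show ?thesis by simp
qed


lemma polar:
  fixes z x :: real
  assumes "z^2 + x^2 \<le> 1"
  shows "\<exists>R \<phi>. \<bar>R\<bar> \<le> 1 \<and> 0 \<le> \<phi> \<and> \<phi> \<le> pi \<and> z = R * cos \<phi> \<and> x = R * sin \<phi>"
proof (cases "z^2 + x^2 = 0")
  case True
  hence "z = 0" "x = 0" by (auto simp: add_nonneg_eq_0_iff)
  thus ?thesis by (intro exI[of _ 0] exI[of _ 0]) simp
next
  case False
  define R0 where "R0 = sqrt (z^2 + x^2)"
  have "z^2 + x^2 > 0" using False by (metis add_nonneg_nonneg zero_le_power2 less_eq_real_def)
  hence R0p: "R0 > 0" unfolding R0_def by simp
  have R01: "R0 \<le> 1" using assms unfolding R0_def by simp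
  have R0sq: "R0^2 = z^2 + x^2" unfolding R0_def by simp
  have n1: "(z/R0)^2 + (x/R0)^2 = 1"
  proof -
    have "(z/R0)^2 + (x/R0)^2 = (z^2 + x^2) / R0^2" by (simp add: power_divide add_divide_distrib)
    also have "\<dots> = 1" using R0p unfolding R0sq[symmetric] by simp
    finally show ?thesis .
  qed
  have n2: "(-z/R0)^2 + (-x/R0)^2 = 1" using n1 by (simp add: power2_eq_square)
  show ?thesis
  proof (cases "0 \<le> x")
    case True
    then obtain \<phi> where "0 \<le> \<phi>" "\<phi> \<le> pi" "z/R0 = cos \<phi>" "x/R0 = sin \<phi>"
      using sincos_total_pi[of "x/R0" "z/R0"] n1 R0p by auto
    thus ?thesis using R0p R01 by (intro exI[of _ R0] exI[of _ \<phi>]) (auto simp: field_simps)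
  next
    case False
    have "0 \<le> -x/R0" using False R0p by (simp add: divide_nonpos_pos)
    then obtain \<phi> where "0 \<le> \<phi>" "\<phi> \<le> pi" "-z/R0 = cos \<phi>" "-x/R0 = sin \<phi>"
      using sincos_total_pi[of "-x/R0" "-z/R0"] n2 by blast
    thus ?thesis using R0p R01 by (intro exI[of _ "-R0"] exI[of _ \<phi>]) (auto simp: field_simps)
  qed
qed

definition g3 :: "real \<Rightarrow> real \<Rightarrow> real" where "g3 k u = max (\<bar>cos u\<bar> - k) 0"

lemma g3_meas[measurable]: "g3 k \<in> borel_measurable borel" unfolding g3_def by measurable
lemma g3_per: "g3 k (u + pi) = g3 k u" unfolding g3_def by simp
lemma g3_bd:
  assumes "0 \<le> k" shows "\<bar>g3 k u\<bar> \<le> 1"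
proof -
  have c: "\<bar>cos u\<bar> \<le> 1" by (rule abs_cos_le_one)
  have "max (\<bar>cos u\<bar> - k) 0 \<le> 1" by (rule max.boundedI) (use c assms in linarith)+
  moreover have "0 \<le> max (\<bar>cos u\<bar> - k) 0" by (rule max.cobounded2)
  ultimately show ?thesis unfolding g3_def by simp
qed

lemma per_l_bound:
  fixes z x k :: real
  assumes zx: "z^2 + x^2 \<le> 1" and \<alpha>: "0 \<le> \<alpha>" "\<alpha> \<le> pi/2"
  shows "(LINT \<theta>:{0..<pi}|lborel. max (\<bar>z * cos \<theta> + x * sin \<theta>\<bar> - cos \<alpha>) 0) \<le> 2 * sin \<alpha> - 2 * \<alpha> * cos \<alpha>"
proof -
  obtain R \<phi> where R: "\<bar>R\<bar> \<le> 1" and \<phi>: "0 \<le> \<phi>" "\<phi> \<le> pi" and zR: "z = R * cos \<phi>" and xR: "x = R * sin \<phi>"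
    using polar[OF zx] by blast
  have k0: "0 \<le> cos \<alpha>" using \<alpha> by (intro cos_ge_zero) auto
  have int: "set_integrable lborel {0..<pi} (\<lambda>\<theta>. g3 (cos \<alpha>) (\<theta> - \<phi>))"
    unfolding set_integrable_def
    by (rule integrableI_bounded_set_indicator[where B=1]) (auto simp: g3_bd[OF k0])
  have "(LINT \<theta>:{0..<pi}|lborel. max (\<bar>z * cos \<theta> + x * sin \<theta>\<bar> - cos \<alpha>) 0) \<le> (LINT \<theta>:{0..<pi}|lborel. g3 (cos \<alpha>) (\<theta> - \<phi>))"
    unfolding set_lebesgue_integral_def
  proof (rule integral_mono')
    show "integrable lborel (\<lambda>\<theta>. indicator {0..<pi} \<theta> *\<^sub>R g3 (cos \<alpha>) (\<theta> - \<phi>))" using int unfolding set_integrable_def .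
    fix \<theta> :: real
    show "0 \<le> indicator {0..<pi} \<theta> *\<^sub>R g3 (cos \<alpha>) (\<theta> - \<phi>)" by (simp add: g3_def)
    have e: "z * cos \<theta> + x * sin \<theta> = R * cos (\<theta> - \<phi>)" by (simp add: zR xR cos_diff algebra_simps)
    have "\<bar>R * cos (\<theta> - \<phi>)\<bar> \<le> \<bar>cos (\<theta> - \<phi>)\<bar>" using R by (simp add: abs_mult mult_left_le_one_le)
    hence "max (\<bar>z * cos \<theta> + x * sin \<theta>\<bar> - cos \<alpha>) 0 \<le> g3 (cos \<alpha>) (\<theta> - \<phi>)" unfolding e g3_def by simp
    thus "indicator {0..<pi} \<theta> *\<^sub>R max (\<bar>z * cos \<theta> + x * sin \<theta>\<bar> - cos \<alpha>) 0 \<le> indicator {0..<pi} \<theta> *\<^sub>R g3 (cos \<alpha>) (\<theta> - \<phi>)"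
      by (simp add: indicator_def)
  qed
  also have "(LINT \<theta>:{0..<pi}|lborel. g3 (cos \<alpha>) (\<theta> - \<phi>)) = (LINT u:{-\<phi>..<-\<phi>+pi}|lborel. g3 (cos \<alpha>) u)"
  proof -
    have "(LINT u:{-\<phi>..<-\<phi>+pi}|lborel. g3 (cos \<alpha>) u) = \<bar>1\<bar> *\<^sub>R (LINT \<theta>|lborel. indicator {-\<phi>..<-\<phi>+pi} (-\<phi> + 1 * \<theta>) *\<^sub>R g3 (cos \<alpha>) (-\<phi> + 1 * \<theta>))"
      unfolding set_lebesgue_integral_def by (rule lborel_integral_real_affine) simp
    also have "\<dots> = (LINT \<theta>:{0..<pi}|lborel. g3 (cos \<alpha>) (\<theta> - \<phi>))"
      unfolding set_lebesgue_integral_def by (simp add: indicator_def)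
    finally show ?thesis by simp
  qed
  also have "\<dots> = (LINT u:{-pi/2..<-pi/2+pi}|lborel. g3 (cos \<alpha>) u)"
    by (rule window[OF g3_meas g3_bd[OF k0] g3_per]) (use \<phi> in auto)
  also have "\<dots> = 2 * sin \<alpha> - 2 * \<alpha> * cos \<alpha>" unfolding g3_def by (rule E1[OF \<alpha>])
  finally show ?thesis .
qed


lemma cs_bound:
  fixes z x c s :: real
  assumes "z^2 + x^2 \<le> 1" "c^2 + s^2 = 1"
  shows "\<bar>z * c + x * s\<bar> \<le> 1"
proof -
  have "(z * c + x * s)^2 + (z * s - x * c)^2 = (z^2 + x^2) * (c^2 + s^2)" by (simp add: power2_eq_square algebra_simps)
  hence "(z * c + x * s)^2 + (z * s - x * c)^2 = z^2 + x^2" using assms(2) by simp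
  hence "(z * c + x * s)^2 \<le> 1" using assms(1) zero_le_power2[of "z * s - x * c"] by linarith
  thus ?thesis by (simp add: abs_square_le_1)
qed

lemma fin_int:
  fixes f :: "_ \<Rightarrow> real"
  assumes "finite_measure M" "f \<in> borel_measurable M" "\<And>l. l \<in> space M \<Longrightarrow> \<bar>f l\<bar> \<le> B"
  shows "integrable M f"
  by (rule finite_measure.integrable_const_bound[OF assms(1), where B=B]) (use assms in \<open>auto intro!: AE_I2\<close>)

lemma pr_le1:
  fixes f :: "_ \<Rightarrow> real"
  assumes P: "prob_space M" and fm: "f \<in> borel_measurable M" and b: "\<And>l. l \<in> space M \<Longrightarrow> 0 \<le> f l \<and> f l \<le> 1"
  shows "0 \<le> (\<integral>l. f l \<partial>M) \<and> (\<integral>l. f l \<partial>M) \<le> 1"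
proof -
  interpret prob_space M by (rule P)
  have "0 \<le> (\<integral>l. f l \<partial>M)" using b by (intro Bochner_Integration.integral_nonneg) auto
  moreover have "(\<integral>l. f l \<partial>M) \<le> (\<integral>l. 1 \<partial>M)" using b by (intro integral_mono') auto
  ultimately show ?thesis by (simp add: prob_space)
qed

lemma part1:
  assumes LHS: "LHS_model M p \<rho>"
  shows "\<bar>WW M p \<rho>\<bar> \<le> 2 / pi * sin (pi / 2 * TT M p \<rho>)"
proof -
  interpret P: prob_space M using LHS_facts(1)[OF LHS] .
  define \<Theta> where "\<Theta> = restrict_space lborel {0..<pi}"
  have sp\<Theta>: "space \<Theta> = {0..<pi}" by (simp add: \<Theta>_def space_restrict_space)
  have int\<Theta>: "\<And>f::real\<Rightarrow>real. integral\<^sup>L \<Theta> f = (LINT \<theta>:{0..<pi}|lborel. f \<theta>)"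
    unfolding \<Theta>_def set_lebesgue_integral_def by (rule integral_restrict_space) simp
  have em\<Theta>: "emeasure \<Theta> (space \<Theta>) = ennreal pi"
    unfolding sp\<Theta> unfolding \<Theta>_def by (subst emeasure_restrict_space) auto
  have me\<Theta>: "measure \<Theta> (space \<Theta>) = pi" by (simp add: measure_def em\<Theta>)
  interpret F\<Theta>: finite_measure \<Theta> by (rule finite_measureI) (simp add: em\<Theta>)
  interpret PS: pair_sigma_finite \<Theta> M proof qed
  interpret FP: finite_measure "\<Theta> \<Otimes>\<^sub>M M"
    by (rule finite_measure_pair_measure) unfold_locales
  have sets_eq: "sets (\<Theta> \<Otimes>\<^sub>M M) = sets (restrict_space borel {0..<pi} \<Otimes>\<^sub>M M)"
    unfolding \<Theta>_def by (intro sets_pair_measure_cong sets_restrict_space_cong sets_lborel refl)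
  have pm0: "\<And>b. (\<lambda>x. p (fst x) (snd x) b) \<in> borel_measurable (restrict_space borel {0..<pi} \<Otimes>\<^sub>M M)"
    using LHS_facts(4)[OF LHS] by (simp add: split_beta')
  have pm[measurable]: "\<And>b. (\<lambda>x. p (fst x) (snd x) b) \<in> borel_measurable (\<Theta> \<Otimes>\<^sub>M M)"
    unfolding measurable_cong_sets[OF sets_eq refl] by (rule pm0)
  have \<rho>m[measurable]: "\<rho> \<in> borel_measurable M" by (rule LHS_facts(2)[OF LHS])
  have cosm[measurable]: "(\<lambda>\<theta>::real. cos \<theta>) \<in> borel_measurable \<Theta>" "(\<lambda>\<theta>::real. sin \<theta>) \<in> borel_measurable \<Theta>"
    unfolding \<Theta>_def by (rule measurable_restrict_space1, measurable)+

  define TTv where "TTv = TT M p \<rho>"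
  define \<alpha> where "\<alpha> = pi / 2 * TTv"
  define k where "k = cos \<alpha>"
  define s where "s = (\<lambda>\<theta> l. p \<theta> l B0 + p \<theta> l B1)"
  define q where "q = (\<lambda>\<theta> l. p \<theta> l B0 - p \<theta> l B1)"
  define r where "r = (\<lambda>\<theta> l. zz (\<rho> l) * cos \<theta> + xx (\<rho> l) * sin \<theta>)"
  define m where "m = (\<lambda>\<theta> l. max (\<bar>r \<theta> l\<bar> - k) 0)"

  have sm[measurable]: "(\<lambda>x. s (fst x) (snd x)) \<in> borel_measurable (\<Theta> \<Otimes>\<^sub>M M)" unfolding s_def by measurable
  have mm[measurable]: "(\<lambda>x. m (fst x) (snd x)) \<in> borel_measurable (\<Theta> \<Otimes>\<^sub>M M)" unfolding m_def r_def by measurable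

  have pt: "\<And>\<theta> l. \<theta> \<in> {0..<pi} \<Longrightarrow> l \<in> space M \<Longrightarrow>
     0 \<le> s \<theta> l \<and> s \<theta> l \<le> 1 \<and> \<bar>q \<theta> l\<bar> \<le> s \<theta> l \<and> \<bar>r \<theta> l\<bar> \<le> 1"
  proof -
    fix \<theta> l assume th: "\<theta> \<in> {0..<pi}" and l: "l \<in> space M"
    have "0 \<le> p \<theta> l B0" "0 \<le> p \<theta> l B1" "0 \<le> p \<theta> l Bnone" using LHS_facts(5)[OF LHS th l] by auto
    moreover have "p \<theta> l B0 + p \<theta> l B1 + p \<theta> l Bnone = 1" using LHS_facts(6)[OF LHS th l] .
    moreover have "\<bar>r \<theta> l\<bar> \<le> 1" unfolding r_def
      by (rule cs_bound[OF dm_bound(1)[OF LHS_facts(3)[OF LHS l]]]) simp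
    ultimately show "0 \<le> s \<theta> l \<and> s \<theta> l \<le> 1 \<and> \<bar>q \<theta> l\<bar> \<le> s \<theta> l \<and> \<bar>r \<theta> l\<bar> \<le> 1"
      unfolding s_def q_def by auto
  qed

  have tf: "\<And>\<theta>. \<theta> \<in> space \<Theta> \<Longrightarrow> tfun M p \<rho> \<theta> = (\<integral>l. s \<theta> l \<partial>M)"
    unfolding sp\<Theta> s_def by (rule tfun_formula[OF LHS])
  have wf: "\<And>\<theta>. \<theta> \<in> space \<Theta> \<Longrightarrow> wfun M p \<rho> \<theta> = (\<integral>l. q \<theta> l * r \<theta> l \<partial>M)"
    unfolding sp\<Theta> q_def r_def by (rule wfun_formula[OF LHS])

  have tfm: "tfun M p \<rho> \<in> borel_measurable \<Theta>"
  proof -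
    have "(\<lambda>\<theta>. \<integral>l. s \<theta> l \<partial>M) \<in> borel_measurable \<Theta>"
      by (rule P.borel_measurable_lebesgue_integral) (simp add: split_beta')
    thus ?thesis by (rule measurable_cong[THEN iffD1, rotated]) (simp add: tf)
  qed
  define \<mu> where "\<mu> = (\<lambda>\<theta>. \<integral>l. m \<theta> l \<partial>M)"
  have \<mu>m: "\<mu> \<in> borel_measurable \<Theta>"
    unfolding \<mu>_def by (rule P.borel_measurable_lebesgue_integral) (simp add: split_beta')

  have sl: "\<And>\<theta>. \<theta> \<in> {0..<pi} \<Longrightarrow> (\<lambda>l. s \<theta> l) \<in> borel_measurable M"
    unfolding s_def using p_meas[OF LHS] by measurable
  have rl: "\<And>\<theta>. (\<lambda>l. r \<theta> l) \<in> borel_measurable M"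
    unfolding r_def by measurable
  have ml: "\<And>\<theta>. (\<lambda>l. m \<theta> l) \<in> borel_measurable M"
    unfolding m_def using rl by measurable

  have Ppos: "\<And>f::'a\<Rightarrow>real. integrable M f \<Longrightarrow> True" by simp
  have FM: "finite_measure M" using P.prob_space_axioms by (simp add: prob_space_def)
  note int_l = fin_int[OF FM]
  note le1_l = pr_le1[OF P.prob_space_axioms]
  have tb: "\<And>\<theta>. \<theta> \<in> space \<Theta> \<Longrightarrow> 0 \<le> tfun M p \<rho> \<theta> \<and> tfun M p \<rho> \<theta> \<le> 1"
    unfolding tf using sl pt by (intro le1_l) (auto simp: sp\<Theta>)
  have tint: "integrable \<Theta> (tfun M p \<rho>)"
    by (rule F\<Theta>.integrable_const_bound[where B=1]) (use tb tfm in \<open>auto intro!: AE_I2\<close>)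
  have T\<Theta>: "TTv = (\<integral>\<theta>. tfun M p \<rho> \<theta> \<partial>\<Theta>) / pi" unfolding TTv_def TT_def int\<Theta> ..
  have W\<Theta>: "WW M p \<rho> = (\<integral>\<theta>. wfun M p \<rho> \<theta> \<partial>\<Theta>) / pi" unfolding WW_def int\<Theta> ..
  have Ti0: "0 \<le> (\<integral>\<theta>. tfun M p \<rho> \<theta> \<partial>\<Theta>)" using tb by (intro Bochner_Integration.integral_nonneg) auto
  have "(\<integral>\<theta>. tfun M p \<rho> \<theta> \<partial>\<Theta>) \<le> (\<integral>\<theta>. 1 \<partial>\<Theta>)" using tb by (intro integral_mono') auto
  hence Ti1: "(\<integral>\<theta>. tfun M p \<rho> \<theta> \<partial>\<Theta>) \<le> pi" by (simp add: me\<Theta>)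
  have T01: "0 \<le> TTv" "TTv \<le> 1" using Ti0 Ti1 unfolding T\<Theta> by (auto simp: divide_le_eq)
  have \<alpha>b: "0 \<le> \<alpha>" "\<alpha> \<le> pi/2" unfolding \<alpha>_def using T01 by (auto simp: mult_le_cancel_left1)
  have k0: "0 \<le> k" unfolding k_def using \<alpha>b by (intro cos_ge_zero) auto
  have mb: "\<And>\<theta> l. \<theta> \<in> {0..<pi} \<Longrightarrow> l \<in> space M \<Longrightarrow> 0 \<le> m \<theta> l \<and> m \<theta> l \<le> 1"
    using pt k0 unfolding m_def by fastforce
  have \<mu>b: "\<And>\<theta>. \<theta> \<in> space \<Theta> \<Longrightarrow> 0 \<le> \<mu> \<theta> \<and> \<mu> \<theta> \<le> 1"
    unfolding \<mu>_def using ml mb by (intro le1_l) (auto simp: sp\<Theta>)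
  have \<mu>int: "integrable \<Theta> \<mu>"
    by (rule F\<Theta>.integrable_const_bound[where B=1]) (use \<mu>b \<mu>m in \<open>auto intro!: AE_I2\<close>)

  have wb: "\<And>\<theta>. \<theta> \<in> space \<Theta> \<Longrightarrow> \<bar>wfun M p \<rho> \<theta>\<bar> \<le> k * tfun M p \<rho> \<theta> + \<mu> \<theta>"
  proof -
    fix \<theta> assume th: "\<theta> \<in> space \<Theta>"
    hence th': "\<theta> \<in> {0..<pi}" by (simp add: sp\<Theta>)
    have si: "integrable M (\<lambda>l. s \<theta> l)" by (rule int_l[where B=1]) (use sl[OF th'] pt[OF th'] in auto)
    have mi: "integrable M (\<lambda>l. m \<theta> l)" by (rule int_l[where B=1]) (use ml mb[OF th'] in auto)
    have "\<bar>wfun M p \<rho> \<theta>\<bar> = \<bar>\<integral>l. q \<theta> l * r \<theta> l \<partial>M\<bar>" using wf[OF th] by simp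
    also have "\<dots> \<le> (\<integral>l. \<bar>q \<theta> l * r \<theta> l\<bar> \<partial>M)" by (rule integral_abs_bound)
    also have "\<dots> \<le> (\<integral>l. k * s \<theta> l + m \<theta> l \<partial>M)"
    proof (rule integral_mono')
      show "integrable M (\<lambda>l. k * s \<theta> l + m \<theta> l)" using si mi by auto
      fix l assume l: "l \<in> space M"
      have P: "0 \<le> s \<theta> l" "s \<theta> l \<le> 1" "\<bar>q \<theta> l\<bar> \<le> s \<theta> l" "\<bar>r \<theta> l\<bar> \<le> 1" using pt[OF th' l] by auto
      have m0: "0 \<le> m \<theta> l" using mb[OF th' l] by simp
      show "0 \<le> k * s \<theta> l + m \<theta> l" using P(1) k0 m0 by simp
      have "\<bar>q \<theta> l * r \<theta> l\<bar> \<le> s \<theta> l * \<bar>r \<theta> l\<bar>" using P by (simp add: abs_mult mult_right_mono)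
      also have "\<dots> \<le> k * s \<theta> l + m \<theta> l"
      proof (cases "\<bar>r \<theta> l\<bar> \<le> k")
        case True
        hence "s \<theta> l * \<bar>r \<theta> l\<bar> \<le> s \<theta> l * k" using P(1) by (rule mult_left_mono)
        thus ?thesis using m0 by (simp add: mult.commute)
      next
        case False
        have "s \<theta> l * (\<bar>r \<theta> l\<bar> - k) \<le> \<bar>r \<theta> l\<bar> - k" using False P by (intro mult_left_le_one_le) auto
        thus ?thesis using False unfolding m_def by (simp add: algebra_simps)
      qed
      finally show "\<bar>q \<theta> l * r \<theta> l\<bar> \<le> k * s \<theta> l + m \<theta> l" .
    qed
    also have "\<dots> = k * tfun M p \<rho> \<theta> + \<mu> \<theta>"
      unfolding \<mu>_def tf[OF th] using si mi by simp
    finally show "\<bar>wfun M p \<rho> \<theta>\<bar> \<le> k * tfun M p \<rho> \<theta> + \<mu> \<theta>" .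
  qed

  define C where "C = 2 * sin \<alpha> - 2 * \<alpha> * cos \<alpha>"
  have perl: "\<And>l. l \<in> space M \<Longrightarrow> 0 \<le> (\<integral>\<theta>. m \<theta> l \<partial>\<Theta>) \<and> (\<integral>\<theta>. m \<theta> l \<partial>\<Theta>) \<le> C"
  proof -
    fix l assume l: "l \<in> space M"
    have "0 \<le> (\<integral>\<theta>. m \<theta> l \<partial>\<Theta>)" unfolding m_def by (intro Bochner_Integration.integral_nonneg) simp
    moreover have "(\<integral>\<theta>. m \<theta> l \<partial>\<Theta>) \<le> C"
      unfolding int\<Theta> C_def m_def r_def k_def
      by (rule per_l_bound[OF dm_bound(1)[OF LHS_facts(3)[OF LHS l]] \<alpha>b])
    ultimately show "0 \<le> (\<integral>\<theta>. m \<theta> l \<partial>\<Theta>) \<and> (\<integral>\<theta>. m \<theta> l \<partial>\<Theta>) \<le> C" by simp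
  qed
  obtain l0 where "l0 \<in> space M" using P.not_empty by blast
  hence C0: "0 \<le> C" using perl by force
  have mint: "integrable (\<Theta> \<Otimes>\<^sub>M M) (case_prod m)"
    by (rule FP.integrable_const_bound[where B=1]) (use mb in \<open>auto intro!: AE_I2 simp: space_pair_measure sp\<Theta> split_beta'\<close>)
  have "(\<integral>\<theta>. \<mu> \<theta> \<partial>\<Theta>) = (\<integral>l. (\<integral>\<theta>. m \<theta> l \<partial>\<Theta>) \<partial>M)"
    unfolding \<mu>_def by (rule PS.Fubini_integral[OF mint, symmetric])
  also have "\<dots> \<le> (\<integral>l. C \<partial>M)" using perl C0 by (intro integral_mono') auto
  also have "\<dots> = C" by (simp add: P.prob_space)
  finally have \<mu>C: "(\<integral>\<theta>. \<mu> \<theta> \<partial>\<Theta>) \<le> C" .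

  have "\<bar>\<integral>\<theta>. wfun M p \<rho> \<theta> \<partial>\<Theta>\<bar> \<le> (\<integral>\<theta>. \<bar>wfun M p \<rho> \<theta>\<bar> \<partial>\<Theta>)" by (rule integral_abs_bound)
  also have "\<dots> \<le> (\<integral>\<theta>. k * tfun M p \<rho> \<theta> + \<mu> \<theta> \<partial>\<Theta>)"
    using wb tint \<mu>int k0 tb \<mu>b by (intro integral_mono') auto
  also have "\<dots> = k * (\<integral>\<theta>. tfun M p \<rho> \<theta> \<partial>\<Theta>) + (\<integral>\<theta>. \<mu> \<theta> \<partial>\<Theta>)"
    using tint \<mu>int by simp
  also have "\<dots> \<le> k * (2 * \<alpha>) + C"
  proof -
    have "(\<integral>\<theta>. tfun M p \<rho> \<theta> \<partial>\<Theta>) = 2 * \<alpha>" unfolding \<alpha>_def using T\<Theta> by simp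
    thus ?thesis using \<mu>C by simp
  qed
  also have "\<dots> = 2 * sin \<alpha>" unfolding C_def k_def by simp
  finally have "\<bar>\<integral>\<theta>. wfun M p \<rho> \<theta> \<partial>\<Theta>\<bar> \<le> 2 * sin \<alpha>" .
  thus ?thesis unfolding W\<Theta> TTv_def[symmetric] \<alpha>_def[symmetric]
    by (simp add: divide_le_eq)
qed


lemma conv_window:
  fixes g :: "real \<Rightarrow> real"
  assumes [measurable]: "g \<in> borel_measurable borel" and bd: "\<And>u. \<bar>g u\<bar> \<le> B"
    and per: "\<And>u. g (u + pi) = g u" and th: "\<theta> \<in> {0..<pi}"
  shows "(LINT \<phi>|lborel. indicator {0<..pi} \<phi> *\<^sub>R g (\<theta> - \<phi>)) = (LINT u:{-pi/2..<-pi/2+pi}|lborel. g u)"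
proof -
  have "(LINT \<phi>|lborel. indicator {0<..pi} \<phi> *\<^sub>R g (\<theta> - \<phi>)) =
      \<bar>-1\<bar> *\<^sub>R (LINT u|lborel. indicator {0<..pi} (\<theta> + -1 * u) *\<^sub>R g (\<theta> - (\<theta> + -1 * u)))"
    by (rule lborel_integral_real_affine) simp
  also have "\<dots> = (LINT u|lborel. indicator {0<..pi} (\<theta> + -1 * u) *\<^sub>R g (\<theta> - (\<theta> + -1 * u)))" by simp
  also have "\<dots> = (LINT u:{\<theta>-pi..<\<theta>-pi+pi}|lborel. g u)"
    unfolding set_lebesgue_integral_def by (rule Bochner_Integration.integral_cong) (auto simp: indicator_def)
  also have "\<dots> = (LINT u:{-pi/2..<-pi/2+pi}|lborel. g u)"
    by (rule window[OF assms(1) bd per]) (use th in auto)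
  finally show ?thesis .
qed

definition psi :: "real \<Rightarrow> 2 \<Rightarrow> real" where
  "psi \<phi> i = (if i = 1 then cos (\<phi>/2) else sin (\<phi>/2))"
definition rho2 :: "real \<Rightarrow> mat2" where
  "rho2 \<phi> = (\<chi> i j. complex_of_real (psi \<phi> i * psi \<phi> j))"

lemma rho2_dm: "density_matrix (rho2 \<phi>)"
  unfolding density_matrix_def Let_def
proof (intro conjI allI)
  fix i j :: 2
  show "rho2 \<phi> $ i $ j = cnj (rho2 \<phi> $ j $ i)" by (simp add: rho2_def mult.commute)
next
  fix v :: "complex^2"
  define w where "w = complex_of_real (psi \<phi> 1) * v$1 + complex_of_real (psi \<phi> 2) * v$2"
  have q: "(\<Sum>i\<in>UNIV. \<Sum>j\<in>UNIV. cnj (v $ i) * rho2 \<phi> $ i $ j * v $ j) = cnj w * w"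
    by (simp add: sum_2 rho2_def w_def algebra_simps)
  have "cnj w * w = complex_of_real ((cmod w)^2)" by (metis complex_norm_square mult.commute)
  thus "Im (\<Sum>i\<in>UNIV. \<Sum>j\<in>UNIV. cnj (v $ i) * rho2 \<phi> $ i $ j * v $ j) = 0"
    "0 \<le> Re (\<Sum>i\<in>UNIV. \<Sum>j\<in>UNIV. cnj (v $ i) * rho2 \<phi> $ i $ j * v $ j)" unfolding q by simp_all
next
  show "trace (rho2 \<phi>) = 1"
  proof -
    have "trace (rho2 \<phi>) = complex_of_real (cos (\<phi>/2) * cos (\<phi>/2)) + complex_of_real (sin (\<phi>/2) * sin (\<phi>/2))"
      by (simp add: trace_def sum_2 rho2_def psi_def)
    also have "\<dots> = complex_of_real (cos (\<phi>/2) * cos (\<phi>/2) + sin (\<phi>/2) * sin (\<phi>/2))" by (simp only: of_real_add)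
    also have "cos (\<phi>/2) * cos (\<phi>/2) + sin (\<phi>/2) * sin (\<phi>/2) = 1" by (rule sin_cos_squared_add3)
    finally show ?thesis by simp
  qed
qed

lemma rho2_zz: "zz (rho2 \<phi>) = cos \<phi>"
proof -
  have "cos \<phi> = cos (2 * (\<phi>/2))" by simp
  also have "\<dots> = (cos (\<phi>/2))^2 - (sin (\<phi>/2))^2" by (rule cos_double)
  finally show ?thesis by (simp add: zz_def rho2_def psi_def power2_eq_square)
qed

lemma rho2_xx: "xx (rho2 \<phi>) = sin \<phi>"
proof -
  have "sin \<phi> = sin (2 * (\<phi>/2))" by simp
  also have "\<dots> = 2 * sin (\<phi>/2) * cos (\<phi>/2)" by (rule sin_double)
  finally show ?thesis by (simp add: xx_def rho2_def psi_def)
qed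

lemma psi_cont[continuous_intros]: "continuous_on UNIV (\<lambda>x. psi x i)"
  by (cases "i = 1") (auto simp: psi_def intro!: continuous_intros)

lemma rho2_meas: "rho2 \<in> borel_measurable borel"
proof (rule borel_measurable_continuous_onI)
  show "continuous_on UNIV rho2" unfolding rho2_def
    by (intro continuous_intros)
qed


definition gd :: "real \<Rightarrow> real" where "gd x = indicator {0<..pi} x / pi"

lemma gd_meas[measurable]: "gd \<in> borel_measurable borel" unfolding gd_def by measurable
lemma gd_nn: "0 \<le> gd x" unfolding gd_def by simp
lemma gd_eq: "gd x = (1/pi) * indicator {0<..pi} x" unfolding gd_def by simp

lemma gd_int: "integrable lborel gd"
proof -
  have "integrable lborel (\<lambda>x. indicator {0<..pi} x *\<^sub>R (1/pi::real))"
    by (rule integrableI_bounded_set_indicator[where B="1/pi"]) auto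
  moreover have "gd = (\<lambda>x. indicator {0<..pi} x *\<^sub>R (1/pi::real))" by (rule ext) (simp add: gd_def)
  ultimately show ?thesis by metis
qed

lemma gd_integral: "integral\<^sup>L lborel gd = 1"
proof -
  have "integral\<^sup>L lborel gd = (1/pi) * integral\<^sup>L lborel (indicator {0<..pi})"
    unfolding gd_eq by simp
  also have "\<dots> = 1" by simp
  finally show ?thesis .
qed

definition MU :: "real measure" where "MU = density lborel (\<lambda>x. ennreal (gd x))"

lemma MU_prob: "prob_space MU"
proof (rule prob_spaceI)
  have "emeasure MU (space MU) = (\<integral>\<^sup>+ x. ennreal (gd x) * indicator UNIV x \<partial>lborel)"
    unfolding MU_def by (subst emeasure_density) auto
  also have "\<dots> = (\<integral>\<^sup>+ x. ennreal (gd x) \<partial>lborel)" by simp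
  also have "\<dots> = ennreal (integral\<^sup>L lborel gd)"
    by (rule nn_integral_eq_integral[OF gd_int]) (simp add: gd_nn)
  also have "\<dots> = 1" by (simp add: gd_integral)
  finally show "emeasure MU (space MU) = 1" .
qed

lemma MU_integral:
  fixes f :: "real \<Rightarrow> real"
  assumes [measurable]: "f \<in> borel_measurable borel"
  shows "integral\<^sup>L MU f = (1/pi) * (LINT x|lborel. indicator {0<..pi} x *\<^sub>R f x)"
proof -
  have "integral\<^sup>L MU f = (LINT x|lborel. gd x *\<^sub>R f x)"
    unfolding MU_def by (rule integral_density) (auto simp: gd_nn)
  also have "\<dots> = (LINT x|lborel. (1/pi) * (indicator {0<..pi} x *\<^sub>R f x))"
    by (simp add: gd_eq)
  also have "\<dots> = (1/pi) * (LINT x|lborel. indicator {0<..pi} x *\<^sub>R f x)" by simp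
  finally show ?thesis .
qed

lemma MU_sets[simp]: "sets MU = sets borel" unfolding MU_def by simp
lemma MU_space[simp]: "space MU = UNIV" unfolding MU_def by simp

lemma g1_per: "g1 c (u + pi) = g1 c u" unfolding g1_def by simp
lemma g2_per: "g2 c (u + pi) = g2 c u" unfolding g2_def by simp
lemma g1_bd: "\<bar>g1 c u\<bar> \<le> 2" unfolding g1_def by auto
lemma g2_bd: "\<bar>g2 c u\<bar> \<le> 2"
proof -
  have "\<bar>cos u\<bar> \<le> 1" by (rule abs_cos_le_one)
  show ?thesis unfolding g2_def by (auto simp: abs_mult; smt (verit) cos_le_one cos_ge_minus_one)
qed

lemma part2:
  assumes t: "t \<in> {0..1::real}"
  shows "\<exists>(M :: real measure) p \<rho>. LHS_model M p \<rho> \<and>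
            (\<forall>\<theta>\<in>{0..<pi}. tfun M p \<rho> \<theta> = t \<and> wfun M p \<rho> \<theta> = 2 / pi * sin (pi / 2 * t))"
proof -
  define \<alpha> where "\<alpha> = pi / 2 * t"
  define c where "c = cos \<alpha>"
  have \<alpha>b: "0 \<le> \<alpha>" "\<alpha> \<le> pi/2" using t unfolding \<alpha>_def by (auto simp: mult_le_cancel_left1)
  have c0: "0 \<le> c" unfolding c_def using \<alpha>b by (intro cos_ge_zero) auto
  define P0 where "P0 = (\<lambda>\<theta> \<phi>. if cos (\<theta> - \<phi>) > c then 1 else (0::real))"
  define P1 where "P1 = (\<lambda>\<theta> \<phi>. if cos (\<theta> - \<phi>) < -c then 1 else (0::real))"
  define p where "p = (\<lambda>\<theta> \<phi> b. if b = B0 then P0 \<theta> \<phi> else if b = B1 then P1 \<theta> \<phi> else 1 - P0 \<theta> \<phi> - P1 \<theta> \<phi>)"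
  have LHS: "LHS_model MU p rho2"
    unfolding LHS_model_def
  proof (intro conjI ballI allI)
    show "prob_space MU" by (rule MU_prob)
    show "rho2 \<in> borel_measurable MU"
      using rho2_meas by (simp add: measurable_cong_sets[OF MU_sets refl])
    show "\<And>l. l \<in> space MU \<Longrightarrow> density_matrix (rho2 l)" by (rule rho2_dm)
    fix b
    let ?N = "restrict_space borel {0..<pi::real}"
    have f1[measurable]: "(\<lambda>x. fst x) \<in> borel_measurable (?N \<Otimes>\<^sub>M MU)"
      by (rule measurable_compose[OF measurable_fst]) (rule measurable_restrict_space1, simp)
    have f2[measurable]: "(\<lambda>x. snd x) \<in> borel_measurable (?N \<Otimes>\<^sub>M MU)"
      by (rule measurable_compose[OF measurable_snd]) (simp add: measurable_cong_sets[OF MU_sets refl])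
    have "(\<lambda>x. p (fst x) (snd x) b) \<in> borel_measurable (?N \<Otimes>\<^sub>M MU)"
      unfolding p_def P0_def P1_def by measurable
    thus "(\<lambda>(\<theta>, l). p \<theta> l b) \<in> borel_measurable (?N \<Otimes>\<^sub>M MU)" by (simp add: split_beta')
  next
    fix \<theta> l b
    have "P0 \<theta> l \<in> {0,1}" "P1 \<theta> l \<in> {0,1}" "\<not> (P0 \<theta> l = 1 \<and> P1 \<theta> l = 1)"
      using c0 unfolding P0_def P1_def by auto
    thus "0 \<le> p \<theta> l b" unfolding p_def by auto
    show "p \<theta> l B0 + p \<theta> l B1 + p \<theta> l Bnone = 1" unfolding p_def by simp
  qed
  have vals: "tfun MU p rho2 \<theta> = t \<and> wfun MU p rho2 \<theta> = 2 / pi * sin (pi / 2 * t)" if th: "\<theta> \<in> {0..<pi}" for \<theta>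
  proof
    have "tfun MU p rho2 \<theta> = (\<integral>l. g1 c (\<theta> - l) \<partial>MU)"
      unfolding tfun_formula[OF LHS th] by (simp add: p_def P0_def P1_def g1_def)
    also have "\<dots> = (1/pi) * (LINT x|lborel. indicator {0<..pi} x *\<^sub>R g1 c (\<theta> - x))"
      by (rule MU_integral) measurable
    also have "\<dots> = (1/pi) * (LINT u:{-pi/2..<-pi/2+pi}|lborel. g1 c u)"
      using conv_window[OF g1_meas g1_bd g1_per th] by simp
    also have "\<dots> = (1/pi) * (2 * \<alpha>)" unfolding c_def using E2[OF \<alpha>b] by simp
    also have "\<dots> = t" unfolding \<alpha>_def by simp
    finally show "tfun MU p rho2 \<theta> = t" .
    have "wfun MU p rho2 \<theta> = (\<integral>l. g2 c (\<theta> - l) \<partial>MU)"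
      unfolding wfun_formula[OF LHS th]
      by (rule Bochner_Integration.integral_cong[OF refl]) (simp add: p_def P0_def P1_def g2_def rho2_zz rho2_xx cos_diff algebra_simps)
    also have "\<dots> = (1/pi) * (LINT x|lborel. indicator {0<..pi} x *\<^sub>R g2 c (\<theta> - x))"
      by (rule MU_integral) measurable
    also have "\<dots> = (1/pi) * (LINT u:{-pi/2..<-pi/2+pi}|lborel. g2 c u)"
      using conv_window[OF g2_meas g2_bd g2_per th] by simp
    also have "\<dots> = (1/pi) * (2 * sin \<alpha>)" unfolding c_def using E3[OF \<alpha>b] by simp
    also have "\<dots> = 2 / pi * sin (pi / 2 * t)" unfolding \<alpha>_def by simp
    finally show "wfun MU p rho2 \<theta> = 2 / pi * sin (pi / 2 * t)" .
  qed
  show ?thesis using LHS vals by blast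
qed


theorem mainTheorem9:
  shows "(\<forall>(M :: 'l measure) p \<rho>. LHS_model M p \<rho> \<longrightarrow>
            \<bar>WW M p \<rho>\<bar> \<le> 2 / pi * sin (pi / 2 * TT M p \<rho>)) \<and>
         (\<forall>t\<in>{0..1::real}. \<exists>(M :: real measure) p \<rho>. LHS_model M p \<rho> \<and>
            (\<forall>\<theta>\<in>{0..<pi}. tfun M p \<rho> \<theta> = t \<and> wfun M p \<rho> \<theta> = 2 / pi * sin (pi / 2 * t)))"
  using part1 part2 by blast

end
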